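(* For all $n\ge3$, the number of pairwise non-isomorphic graphs among the quotient graphs $Q_R$, $R\in\mathcal C_n^*$, is at least $2^n-2n+1$.
   Context: $S_n$ is the set of permutations of $[n]$ with the weak order (inclusion of inversion sets); a lattice congruence is an equivalence relation compatible with joins and meets. Fences. $]a,b[=\{a+1,\dots,b-1\}$. The fence $f(a,b,L)$, for $1\le a<b\le n$ and $L\subseteq\,]a,b[$, is the set of cover edges joining two permutations that differ by swapping adjacent entries $a,b$, with the values of $L$ left of $a,b$ and those of $]a,b[\setminus L$ to the right. Forcing order: $f(a,b,L)\prec f(c,d,M)$ iff $a\le c<d\le b$, $(a,b)\ne(c,d)$, $M=L\cap\,]c,d[$. Lattice congruences $R$ correspond bijectively to downsets $F_R$ of the forcing order (a cover edge joins equivalent permutations iff it lies in a fence of $F_R$). $R$ is essential if $F_R$ contains no fence $f(a,a+1,\emptyset)$; $\mathcal C_n^*$ is the set of essential congruences. $Q_R$ is the undirected cover graph of $S_n/R$. *)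

theory Defs
  imports Main
begin

text \<open>Permutations of [n] = {1..n} in one-line notation, as lists.\<close>
definition perms :: "nat \<Rightarrow> nat list set" where
  "perms n = {p. distinct p \<and> set p = {1..n}}"

definition invs :: "nat list \<Rightarrow> (nat \<times> nat) set" where
  "invs p = {(a,b). a < b \<and> (\<exists>i j. i < j \<and> j < length p \<and> p ! i = b \<and> p ! j = a)}"

definition weak_le :: "nat list \<Rightarrow> nat list \<Rightarrow> bool" where
  "weak_le p q \<longleftrightarrow> invs p \<subseteq> invs q"

definition wjoin :: "nat \<Rightarrow> nat list \<Rightarrow> nat list \<Rightarrow> nat list" where
  "wjoin n x y = (THE z. z \<in> perms n \<and> weak_le x z \<and> weak_le y z \<and>
      (\<forall>w\<in>perms n. weak_le x w \<and> weak_le y w \<longrightarrow> weak_le z w))"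

definition wmeet :: "nat \<Rightarrow> nat list \<Rightarrow> nat list \<Rightarrow> nat list" where
  "wmeet n x y = (THE z. z \<in> perms n \<and> weak_le z x \<and> weak_le z y \<and>
      (\<forall>w\<in>perms n. weak_le w x \<and> weak_le w y \<longrightarrow> weak_le w z))"

definition lattice_cong :: "nat \<Rightarrow> (nat list \<times> nat list) set \<Rightarrow> bool" where
  "lattice_cong n R \<longleftrightarrow> equiv (perms n) R \<and>
     (\<forall>x\<in>perms n. \<forall>y\<in>perms n. \<forall>z\<in>perms n. (x,y) \<in> R \<longrightarrow>
        (wjoin n x z, wjoin n y z) \<in> R \<and> (wmeet n x z, wmeet n y z) \<in> R)"

definition fence :: "nat \<Rightarrow> nat \<Rightarrow> nat \<Rightarrow> nat set \<Rightarrow> (nat list \<times> nat list) set" where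
  "fence n a b L = {(p,q). p \<in> perms n \<and> q \<in> perms n \<and>
     (\<exists>i. Suc i < length p \<and> p ! i = a \<and> p ! Suc i = b \<and>
          q = p[i := b, Suc i := a] \<and>
          (\<forall>c\<in>L. c \<in> set (take i p)) \<and>
          (\<forall>c\<in>{a<..<b} - L. c \<in> set (drop (Suc (Suc i)) p)))}"

definition valid_fence :: "nat \<Rightarrow> nat \<times> nat \<times> nat set \<Rightarrow> bool" where
  "valid_fence n f \<longleftrightarrow> (case f of (a,b,L) \<Rightarrow> 1 \<le> a \<and> a < b \<and> b \<le> n \<and> L \<subseteq> {a<..<b})"

definition fences_of :: "nat \<Rightarrow> (nat list \<times> nat list) set \<Rightarrow> (nat \<times> nat \<times> nat set) set" where
  "fences_of n R = {f. valid_fence n f \<and> (case f of (a,b,L) \<Rightarrow> fence n a b L \<subseteq> R)}"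

definition ess_congs :: "nat \<Rightarrow> (nat list \<times> nat list) set set" where
  "ess_congs n = {R. lattice_cong n R \<and> (\<forall>a. (a, a+1, {}) \<notin> fences_of n R)}"

text \<open>Undirected graphs as (vertex set, set of 2-element edges).\<close>
type_synonym 'v graph = "'v set \<times> 'v set set"

definition quot_le :: "nat list set \<Rightarrow> nat list set \<Rightarrow> bool" where
  "quot_le X Y \<longleftrightarrow> (\<exists>x\<in>X. \<exists>y\<in>Y. weak_le x y)"

definition quot_cover :: "nat list set set \<Rightarrow> nat list set \<Rightarrow> nat list set \<Rightarrow> bool" where
  "quot_cover V X Y \<longleftrightarrow> X \<in> V \<and> Y \<in> V \<and> quot_le X Y \<and> X \<noteq> Y \<and>
     \<not> (\<exists>Z\<in>V. quot_le X Z \<and> X \<noteq> Z \<and> quot_le Z Y \<and> Z \<noteq> Y)"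

definition QR :: "nat \<Rightarrow> (nat list \<times> nat list) set \<Rightarrow> nat list set graph" where
  "QR n R = (perms n // R,
     {{X,Y} | X Y. quot_cover (perms n // R) X Y})"

definition graph_iso :: "'a graph \<Rightarrow> 'b graph \<Rightarrow> bool" where
  "graph_iso G H \<longleftrightarrow> (\<exists>f. bij_betw f (fst G) (fst H) \<and>
     (\<forall>x\<in>fst G. \<forall>y\<in>fst G. {x,y} \<in> snd G \<longleftrightarrow> {f x, f y} \<in> snd H))"

end

theory Submission
  imports Defs
begin


definition bef :: "nat list \<Rightarrow> nat \<Rightarrow> nat \<Rightarrow> bool" where
  "bef p u v \<longleftrightarrow> (\<exists>i j. i < j \<and> j < length p \<and> p ! i = u \<and> p ! j = v)"

lemma invs_bef: "invs p = {(a,b). a < b \<and> bef p b a}"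
  unfolding invs_def bef_def by auto

lemma bef_Nil[simp]: "\<not> bef [] u v"
  unfolding bef_def by auto

lemma bef_Cons: "bef (x#xs) u v \<longleftrightarrow> (u = x \<and> v \<in> set xs) \<or> bef xs u v"
proof
  assume "bef (x#xs) u v"
  then obtain i j where ij: "i < j" "j < length (x#xs)" "(x#xs)!i = u" "(x#xs)!j = v"
    unfolding bef_def by blast
  show "(u = x \<and> v \<in> set xs) \<or> bef xs u v"
  proof (cases i)
    case 0
    then have "u = x" using ij by simp
    moreover obtain j' where "j = Suc j'" using ij 0 by (cases j) auto
    ultimately show ?thesis using ij by (auto simp: in_set_conv_nth)
  next
    case (Suc i')
    obtain j' where "j = Suc j'" using ij Suc by (cases j) auto
    then show ?thesis using ij Suc unfolding bef_def by auto
  qed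
next
  assume "(u = x \<and> v \<in> set xs) \<or> bef xs u v"
  then show "bef (x#xs) u v"
  proof
    assume "u = x \<and> v \<in> set xs"
    then obtain j where "j < length xs" "xs!j = v" by (auto simp: in_set_conv_nth)
    then show ?thesis using \<open>u = x \<and> v \<in> set xs\<close> unfolding bef_def
      by (intro exI[of _ 0] exI[of _ "Suc j"]) auto
  next
    assume "bef xs u v"
    then obtain i j where "i < j" "j < length xs" "xs!i = u" "xs!j = v" unfolding bef_def by blast
    then show ?thesis unfolding bef_def by (intro exI[of _ "Suc i"] exI[of _ "Suc j"]) auto
  qed
qed

lemma bef_append: "bef (xs @ ys) u v \<longleftrightarrow> bef xs u v \<or> bef ys u v \<or> (u \<in> set xs \<and> v \<in> set ys)"
  by (induction xs) (auto simp: bef_Cons)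

lemma bef_set: "bef p u v \<Longrightarrow> u \<in> set p \<and> v \<in> set p"
  by (induction p) (auto simp: bef_Cons)

lemma bef_irrefl: "distinct p \<Longrightarrow> \<not> bef p u u"
  by (induction p) (auto simp: bef_Cons dest: bef_set)

lemma bef_asym: "distinct p \<Longrightarrow> bef p u v \<Longrightarrow> \<not> bef p v u"
  by (induction p) (auto simp: bef_Cons dest: bef_set)

lemma bef_trans: "distinct p \<Longrightarrow> bef p u v \<Longrightarrow> bef p v w \<Longrightarrow> bef p u w"
  by (induction p) (auto simp: bef_Cons dest: bef_set)

lemma bef_total: "u \<in> set p \<Longrightarrow> v \<in> set p \<Longrightarrow> u \<noteq> v \<Longrightarrow> bef p u v \<or> bef p v u"
  by (induction p) (auto simp: bef_Cons)

lemma bef_rev: "bef (rev p) u v \<longleftrightarrow> bef p v u"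
  by (induction p) (auto simp: bef_Cons bef_append)

lemma bef_not: "distinct p \<Longrightarrow> u \<in> set p \<Longrightarrow> v \<in> set p \<Longrightarrow> u \<noteq> v \<Longrightarrow> bef p u v \<longleftrightarrow> \<not> bef p v u"
  using bef_asym bef_total by blast

lemma list_eq_bef:
  "distinct xs \<Longrightarrow> distinct ys \<Longrightarrow> set xs = set ys \<Longrightarrow> (\<And>u v. bef xs u v \<longleftrightarrow> bef ys u v) \<Longrightarrow> xs = ys"
proof (induction xs arbitrary: ys)
  case Nil then show ?case by simp
next
  case (Cons x xs)
  then obtain y ys' where ys: "ys = y # ys'" by (cases ys) auto
  have "x = y"
  proof (rule ccontr)
    assume "x \<noteq> y"
    then have "x \<in> set ys'" using Cons.prems ys by auto
    then have "bef ys y x" using ys by (simp add: bef_Cons)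
    then have "bef (x#xs) y x" using Cons.prems(4) by simp
    then show False using Cons.prems(1) \<open>x \<noteq> y\<close> by (auto simp: bef_Cons dest: bef_set)
  qed
  moreover have "xs = ys'"
  proof (rule Cons.IH)
    show "distinct xs" "distinct ys'" using Cons.prems ys by auto
    have "set xs = set (x#xs) - {x}" using Cons.prems(1) by auto
    moreover have "set ys' = set ys - {x}" using Cons.prems(2) ys \<open>x = y\<close> by auto
    ultimately show se: "set xs = set ys'" using Cons.prems(3) by (metis list.set(2))
    fix u v show "bef xs u v \<longleftrightarrow> bef ys' u v"
      using Cons.prems(1,2) Cons.prems(4)[of u v] ys \<open>x = y\<close> se
      by (auto simp: bef_Cons dest: bef_set)
  qed
  ultimately show ?case using ys by simp
qed


lemma perms_distinct: "p \<in> perms n \<Longrightarrow> distinct p" and perms_set: "p \<in> perms n \<Longrightarrow> set p = {1..n}"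
  unfolding perms_def by auto

lemma perm_eq_invs:
  assumes "p \<in> perms n" "q \<in> perms n" "invs p = invs q" shows "p = q"
proof (rule list_eq_bef)
  show dp: "distinct p" "distinct q" using assms perms_distinct by auto
  show sp: "set p = set q" using assms perms_set by auto
  fix u v
  show "bef p u v \<longleftrightarrow> bef q u v"
  proof (cases "u \<in> set p \<and> v \<in> set p \<and> u \<noteq> v")
    case True
    have iv: "\<And>a b. a < b \<Longrightarrow> bef p b a \<longleftrightarrow> bef q b a"
      using assms(3) unfolding invs_bef by (auto simp: set_eq_iff)
    show ?thesis
    proof (cases "u < v")
      case True
      then show ?thesis using iv[of u v] bef_not[OF dp(1), of u v] bef_not[OF dp(2), of u v]
        \<open>u \<in> set p \<and> v \<in> set p \<and> u \<noteq> v\<close> sp by auto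
    next
      case False
      then show ?thesis using iv[of v u] \<open>u \<in> set p \<and> v \<in> set p \<and> u \<noteq> v\<close> by auto
    qed
  next
    case False
    then show ?thesis using bef_set bef_irrefl dp sp by metis
  qed
qed

lemma exists_sorted:
  fixes R :: "nat \<Rightarrow> nat \<Rightarrow> bool"
  assumes fin: "finite S" and irr: "\<And>u. u \<in> S \<Longrightarrow> \<not> R u u"
    and tr: "\<And>u v w. u \<in> S \<Longrightarrow> v \<in> S \<Longrightarrow> w \<in> S \<Longrightarrow> R u v \<Longrightarrow> R v w \<Longrightarrow> R u w"
    and tot: "\<And>u v. u \<in> S \<Longrightarrow> v \<in> S \<Longrightarrow> u \<noteq> v \<Longrightarrow> R u v \<or> R v u"
  shows "\<exists>z. distinct z \<and> set z = S \<and> (\<forall>u\<in>S. \<forall>v\<in>S. bef z u v \<longleftrightarrow> R u v)"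
proof -
  define f where "f u = card {w\<in>S. R w u}" for u
  have fmono: "f u < f v" if "u \<in> S" "v \<in> S" "R u v" for u v
    unfolding f_def
  proof (rule psubset_card_mono)
    show "finite {w \<in> S. R w v}" using fin by auto
    have "{w \<in> S. R w u} \<subseteq> {w \<in> S. R w v}"
      using that tr[of _ u v] by blast
    moreover have "u \<in> {w \<in> S. R w v}" "u \<notin> {w \<in> S. R w u}" using that irr by auto
    ultimately show "{w \<in> S. R w u} \<subset> {w \<in> S. R w v}" by blast
  qed
  define z where "z = sort_key f (sorted_list_of_set S)"
  have dz: "distinct z" and sz: "set z = S" using fin by (auto simp: z_def)
  have so: "sorted (map f z)" by (simp add: z_def)
  have b1: "R u v" if "bef z u v" for u v
  proof -
    have "\<exists>i j. i < j \<and> j < length z \<and> z!i = u \<and> z!j = v" using that by (simp add: bef_def)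
    then obtain i j where ij: "i < j" "j < length z" "z!i = u" "z!j = v" by blast
    have "f u \<le> f v" using sorted_nth_mono[OF so, of i j] ij by auto
    moreover have "u \<noteq> v" using ij dz by (auto simp: nth_eq_iff_index_eq)
    moreover have "u \<in> S" "v \<in> S" using ij sz by auto
    ultimately show ?thesis using tot[of u v] fmono[of v u] by (meson not_le)
  qed
  have b2: "bef z u v" if "u \<in> S" "v \<in> S" "R u v" for u v
  proof -
    have "u \<noteq> v" using irr that by auto
    then have "bef z u v \<or> bef z v u" using bef_total sz that by auto
    moreover have "\<not> R v u" using tr[of u v u] irr[of u] that by blast
    ultimately show "bef z u v" using b1 by auto
  qed
  have "\<forall>u\<in>S. \<forall>v\<in>S. bef z u v \<longleftrightarrow> R u v" using b1 b2 by blast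
  then show ?thesis using dz sz by blast
qed

definition Dr :: "nat list \<Rightarrow> nat list \<Rightarrow> (nat \<times> nat) set" where
  "Dr x y = {(u,v). v < u \<and> (bef x u v \<or> bef y u v)}"

definition Jr :: "nat list \<Rightarrow> nat list \<Rightarrow> nat \<Rightarrow> nat \<Rightarrow> bool" where
  "Jr x y u v \<longleftrightarrow> (v < u \<and> (u,v) \<in> (Dr x y)\<^sup>+) \<or> (u < v \<and> (v,u) \<notin> (Dr x y)\<^sup>+)"

lemma C_dec: "(u,v) \<in> (Dr x y)\<^sup>+ \<Longrightarrow> v < u"
  by (induction rule: trancl_induct) (auto simp: Dr_def)

lemma D_co:
  assumes "x \<in> perms n" "y \<in> perms n" "(w,a) \<in> Dr x y" "a < b" "b < w" "b \<in> {1..n}"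
  shows "(w,b) \<in> Dr x y \<or> (b,a) \<in> Dr x y"
proof -
  have "bef x w a \<or> bef y w a" using assms(3) by (auto simp: Dr_def)
  then show ?thesis
  proof
    assume h: "bef x w a"
    have "b \<in> set x" "w \<in> set x" using assms perms_set bef_set[OF h] by auto
    then have "bef x w b \<or> bef x b w" using bef_total assms by auto
    then show ?thesis using h bef_trans[OF perms_distinct[OF assms(1)]] assms(4,5)
      by (auto simp: Dr_def)
  next
    assume h: "bef y w a"
    have "b \<in> set y" "w \<in> set y" using assms perms_set bef_set[OF h] by auto
    then have "bef y w b \<or> bef y b w" using bef_total assms by auto
    then show ?thesis using h bef_trans[OF perms_distinct[OF assms(2)]] assms(4,5)
      by (auto simp: Dr_def)
  qed
qed

lemma C_co:
  assumes "x \<in> perms n" "y \<in> perms n" "(c,a) \<in> (Dr x y)\<^sup>+"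
  shows "a < b \<Longrightarrow> b < c \<Longrightarrow> b \<in> {1..n} \<Longrightarrow> (c,b) \<in> (Dr x y)\<^sup>+ \<or> (b,a) \<in> (Dr x y)\<^sup>+"
  using assms(3)
proof (induction arbitrary: b rule: trancl_induct)
  case (base a)
  then show ?case using D_co[OF assms(1,2)] by blast
next
  case (step w a)
  have wa: "a < w" using step.hyps(2) by (auto simp: Dr_def)
  have cw: "w < c" using C_dec step.hyps(1) by blast
  consider "b = w" | "w < b" | "b < w" by linarith
  then show ?case
  proof cases
    case 1 then show ?thesis using step by auto
  next
    case 2
    then have "(c,b) \<in> (Dr x y)\<^sup>+ \<or> (b,w) \<in> (Dr x y)\<^sup>+" using step by auto
    then show ?thesis using step.hyps(2) by (meson trancl_into_trancl)
  next
    case 3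
    then have "(w,b) \<in> Dr x y \<or> (b,a) \<in> Dr x y" using D_co[OF assms(1,2) step.hyps(2)] step by auto
    then show ?thesis using step.hyps(1) by auto
  qed
qed

lemma D_range:
  assumes "x \<in> perms n" "y \<in> perms n" "(u,v) \<in> Dr x y" shows "u \<in> {1..n} \<and> v \<in> {1..n}"
proof -
  have "bef x u v \<or> bef y u v" using assms(3) by (simp add: Dr_def)
  then show ?thesis using bef_set[of x u v] bef_set[of y u v] perms_set[OF assms(1)] perms_set[OF assms(2)]
    by blast
qed

lemma C_range:
  assumes "x \<in> perms n" "y \<in> perms n" "(u,v) \<in> (Dr x y)\<^sup>+" shows "u \<in> {1..n} \<and> v \<in> {1..n}"
  using assms(3)
proof (induction rule: trancl_induct)
  case (base b) then show ?case using D_range[OF assms(1,2)] by blast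
next
  case (step b c) then show ?case using D_range[OF assms(1,2)] by blast
qed

lemma Jr_order:
  assumes "x \<in> perms n" "y \<in> perms n"
  shows "\<And>u. \<not> Jr x y u u"
    and "\<And>u v w. u \<in> {1..n} \<Longrightarrow> v \<in> {1..n} \<Longrightarrow> w \<in> {1..n} \<Longrightarrow> Jr x y u v \<Longrightarrow> Jr x y v w \<Longrightarrow> Jr x y u w"
    and "\<And>u v. u \<noteq> v \<Longrightarrow> Jr x y u v \<or> Jr x y v u"
proof -
  show "\<And>u. \<not> Jr x y u u" by (auto simp: Jr_def)
  show "\<And>u v. u \<noteq> v \<Longrightarrow> Jr x y u v \<or> Jr x y v u" by (auto simp: Jr_def)
  fix u v w assume r: "u \<in> {1..n}" "v \<in> {1..n}" "w \<in> {1..n}" and h: "Jr x y u v" "Jr x y v w"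
  let ?C = "(Dr x y)\<^sup>+"
  have co: "\<And>c a b. (c,a) \<in> ?C \<Longrightarrow> a < b \<Longrightarrow> b < c \<Longrightarrow> b \<in> {1..n} \<Longrightarrow> (c,b) \<in> ?C \<or> (b,a) \<in> ?C"
    using C_co[OF assms] by blast
  have tr: "\<And>a b c. (a,b) \<in> ?C \<Longrightarrow> (b,c) \<in> ?C \<Longrightarrow> (a,c) \<in> ?C" by auto
  have J1: "Jr x y a b \<longleftrightarrow> (a,b) \<in> ?C" if "b < a" for a b using that by (auto simp: Jr_def)
  have J2: "Jr x y a b \<longleftrightarrow> (b,a) \<notin> ?C" if "a < b" for a b using that by (auto simp: Jr_def)
  consider "u > v" "v > w" | "u < v" "v < w" | "v < u" "u < w" | "v < w" "w < u" | "u < w" "w < v" | "w < u" "u < v"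
    | "u = w" | "u = v" | "v = w" by linarith
  then show "Jr x y u w"
  proof cases
    case 1 then show ?thesis using h J1 by (meson order.strict_trans trancl_trans)
  next
    case 2
    have a: "(v,u) \<notin> ?C" using J2[of u v] h(1) 2 by simp
    have b: "(w,v) \<notin> ?C" using J2[of v w] h(2) 2 by simp
    have "(w,u) \<notin> ?C" using co[of w u v] r a b 2 by blast
    then show ?thesis using J2[of u w] 2 by simp
  next
    case 3
    have a: "(u,v) \<in> ?C" using J1[of v u] h(1) 3 by simp
    have b: "(w,v) \<notin> ?C" using J2[of v w] h(2) 3 by simp
    have "(w,u) \<notin> ?C" using a b trancl_trans[of w u "Dr x y" v] by blast
    then show ?thesis using J2[of u w] 3 by simp
  next
    case 4
    have a: "(u,v) \<in> ?C" using J1[of v u] h(1) 4 by simp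
    have b: "(w,v) \<notin> ?C" using J2[of v w] h(2) 4 by simp
    have "(u,w) \<in> ?C" using co[of u v w] r a b 4 by blast
    then show ?thesis using J1[of w u] 4 by simp
  next
    case 5
    have a: "(v,u) \<notin> ?C" using J2[of u v] h(1) 5 by simp
    have b: "(v,w) \<in> ?C" using J1[of w v] h(2) 5 by simp
    have "(w,u) \<notin> ?C" using a b trancl_trans[of v w "Dr x y" u] by blast
    then show ?thesis using J2[of u w] 5 by simp
  next
    case 6
    have a: "(v,u) \<notin> ?C" using J2[of u v] h(1) 6 by simp
    have b: "(v,w) \<in> ?C" using J1[of w v] h(2) 6 by simp
    have "(u,w) \<in> ?C" using co[of v w u] r a b 6 by blast
    then show ?thesis using J1[of w u] 6 by simp
  next
    case 7 then show ?thesis using h J1 J2 by (metis less_linear)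
  next
    case 8 then show ?thesis using h(1) by (simp add: Jr_def)
  next
    case 9 then show ?thesis using h(2) by (simp add: Jr_def)
  qed
qed



lemma weak_le_antisym: "p \<in> perms n \<Longrightarrow> q \<in> perms n \<Longrightarrow> weak_le p q \<Longrightarrow> weak_le q p \<Longrightarrow> p = q"
  unfolding weak_le_def using perm_eq_invs by blast

lemma C_sub_w:
  assumes "w \<in> perms n" "invs x \<subseteq> invs w" "invs y \<subseteq> invs w" "(u,v) \<in> (Dr x y)\<^sup>+"
  shows "v < u \<and> bef w u v"
  using assms(4)
proof (induction rule: trancl_induct)
  case (base b)
  then show ?case using assms(2,3) unfolding Dr_def invs_bef by auto
next
  case (step b c)
  have "c < b \<and> bef w b c" using step.hyps(2) assms(2,3) unfolding Dr_def invs_bef by auto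
  then show ?case using step.IH bef_trans[OF perms_distinct[OF assms(1)]] by auto
qed

lemma join_exists:
  assumes "x \<in> perms n" "y \<in> perms n"
  shows "\<exists>z. z \<in> perms n \<and> (\<forall>u\<in>{1..n}. \<forall>v\<in>{1..n}. bef z u v \<longleftrightarrow> Jr x y u v)"
proof -
  obtain z where "distinct z" "set z = {1..n}" "\<forall>u\<in>{1..n}. \<forall>v\<in>{1..n}. bef z u v \<longleftrightarrow> Jr x y u v"
    using exists_sorted[of "{1..n}" "Jr x y"] Jr_order[OF assms] by blast
  then show ?thesis unfolding perms_def by blast
qed

definition is_join where
  "is_join n x y z \<longleftrightarrow> z \<in> perms n \<and> weak_le x z \<and> weak_le y z \<and>
      (\<forall>w\<in>perms n. weak_le x w \<and> weak_le y w \<longrightarrow> weak_le z w)"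

lemma wjoin_spec:
  assumes "x \<in> perms n" "y \<in> perms n"
  shows "is_join n x y (wjoin n x y)"
    and "\<forall>u\<in>{1..n}. \<forall>v\<in>{1..n}. bef (wjoin n x y) u v \<longleftrightarrow> Jr x y u v"
proof -
  obtain z where z: "z \<in> perms n" "\<forall>u\<in>{1..n}. \<forall>v\<in>{1..n}. bef z u v \<longleftrightarrow> Jr x y u v"
    using join_exists[OF assms] by blast
  have "weak_le x z" 
    unfolding weak_le_def invs_bef
  proof clarify
    fix a b assume "a < b" "bef x b a"
    then have "(b,a) \<in> (Dr x y)\<^sup>+" "a \<in> {1..n}" "b \<in> {1..n}"
      using bef_set[of x b a] perms_set[OF assms(1)] by (auto simp: Dr_def)
    then show "bef z b a" using z \<open>a < b\<close> by (auto simp: Jr_def)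
  qed
  moreover have "weak_le y z" 
    unfolding weak_le_def invs_bef
  proof clarify
    fix a b assume "a < b" "bef y b a"
    then have "(b,a) \<in> (Dr x y)\<^sup>+" "a \<in> {1..n}" "b \<in> {1..n}"
      using bef_set[of y b a] perms_set[OF assms(2)] by (auto simp: Dr_def)
    then show "bef z b a" using z \<open>a < b\<close> by (auto simp: Jr_def)
  qed
  moreover have "weak_le z w" if "w \<in> perms n" "weak_le x w" "weak_le y w" for w
    unfolding weak_le_def invs_bef
  proof clarify
    fix a b assume "a < b" "bef z b a"
    then have "a \<in> {1..n}" "b \<in> {1..n}" using bef_set perms_set[OF z(1)] by auto
    then have "(b,a) \<in> (Dr x y)\<^sup>+" using z \<open>a < b\<close> \<open>bef z b a\<close> by (auto simp: Jr_def)
    then show "bef w b a" using C_sub_w[OF that(1)] that(2,3) unfolding weak_le_def by blast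
  qed
  ultimately have jz: "is_join n x y z" using z(1) unfolding is_join_def by blast
  have uq: "z' = z" if "is_join n x y z'" for z'
    using that jz weak_le_antisym unfolding is_join_def by blast
  have "wjoin n x y = z" unfolding wjoin_def
    using jz uq unfolding is_join_def by (intro the_equality) blast+
  then show "is_join n x y (wjoin n x y)" "\<forall>u\<in>{1..n}. \<forall>v\<in>{1..n}. bef (wjoin n x y) u v \<longleftrightarrow> Jr x y u v"
    using jz z by auto
qed

lemma rev_perms: "p \<in> perms n \<Longrightarrow> rev p \<in> perms n"
  unfolding perms_def by auto

lemma invs_rev:
  assumes "p \<in> perms n"
  shows "invs (rev p) = {(a,b). a < b \<and> a \<in> {1..n} \<and> b \<in> {1..n}} - invs p"
proof -
  have "bef p a b \<longleftrightarrow> \<not> bef p b a" if "a < b" "a \<in> {1..n}" "b \<in> {1..n}" for a b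
    using bef_not[OF perms_distinct[OF assms], of a b] that perms_set[OF assms] by auto
  moreover have "bef p a b \<Longrightarrow> a \<in> {1..n} \<and> b \<in> {1..n}" for a b
    using bef_set perms_set[OF assms] by blast
  ultimately show ?thesis unfolding invs_bef bef_rev by auto
qed

lemma invs_range: "p \<in> perms n \<Longrightarrow> invs p \<subseteq> {(a,b). a < b \<and> a \<in> {1..n} \<and> b \<in> {1..n}}"
  unfolding invs_bef using bef_set perms_set by fastforce

lemma weak_le_rev: "p \<in> perms n \<Longrightarrow> q \<in> perms n \<Longrightarrow> weak_le (rev p) (rev q) \<longleftrightarrow> weak_le q p"
proof -
  assume "p \<in> perms n" "q \<in> perms n"
  note a = invs_rev[OF this(1)] invs_rev[OF this(2)] invs_range[OF this(1)] invs_range[OF this(2)]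
  have d: "\<And>A B P. A \<subseteq> P \<Longrightarrow> B \<subseteq> P \<Longrightarrow> (P - A \<subseteq> P - B) = (B \<subseteq> A)" by blast
  show ?thesis unfolding weak_le_def a(1,2) using d[OF a(3,4)] .
qed

lemma wmeet_eq:
  assumes "x \<in> perms n" "y \<in> perms n"
  shows "wmeet n x y = rev (wjoin n (rev x) (rev y))"
proof -
  let ?j = "wjoin n (rev x) (rev y)"
  have j: "is_join n (rev x) (rev y) ?j" using wjoin_spec(1) rev_perms assms by blast
  let ?m = "rev ?j"
  have mp: "?m \<in> perms n" using j rev_perms unfolding is_join_def by blast
  have P: "?m \<in> perms n \<and> weak_le ?m x \<and> weak_le ?m y \<and>
      (\<forall>w\<in>perms n. weak_le w x \<and> weak_le w y \<longrightarrow> weak_le w ?m)"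
  proof (intro conjI ballI impI)
    show "?m \<in> perms n" by (fact mp)
    show "weak_le ?m x" using weak_le_rev[OF assms(1) mp] j unfolding is_join_def by simp
    show "weak_le ?m y" using weak_le_rev[OF assms(2) mp] j unfolding is_join_def by simp
    fix w assume "w \<in> perms n" "weak_le w x \<and> weak_le w y"
    then have "weak_le (rev x) (rev w)" "weak_le (rev y) (rev w)"
      using weak_le_rev assms by blast+
    then have "weak_le ?j (rev w)" using j rev_perms[OF \<open>w \<in> perms n\<close>] unfolding is_join_def by blast
    then show "weak_le w ?m" using weak_le_rev[OF mp \<open>w \<in> perms n\<close>] by simp
  qed
  show ?thesis unfolding wmeet_def
  proof (rule the_equality)
    show "?m \<in> perms n \<and> weak_le ?m x \<and> weak_le ?m y \<and>
      (\<forall>w\<in>perms n. weak_le w x \<and> weak_le w y \<longrightarrow> weak_le w ?m)" by (fact P)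
    fix z assume "z \<in> perms n \<and> weak_le z x \<and> weak_le z y \<and>
      (\<forall>w\<in>perms n. weak_le w x \<and> weak_le w y \<longrightarrow> weak_le w z)"
    then show "z = ?m" using P weak_le_antisym by blast
  qed
qed



definition free :: "nat list \<Rightarrow> nat \<Rightarrow> nat \<Rightarrow> bool" where
  "free p a b \<longleftrightarrow> (\<forall>c. a < c \<and> c < b \<longrightarrow> (bef p c a \<longleftrightarrow> bef p c b))"

definition Lset :: "nat list \<Rightarrow> nat \<Rightarrow> nat \<Rightarrow> nat set" where
  "Lset p a b = {c. a < c \<and> c < b \<and> bef p c a}"

definition agree :: "nat \<Rightarrow> nat \<Rightarrow> nat list \<Rightarrow> nat list \<Rightarrow> bool" where
  "agree n d x y \<longleftrightarrow> (\<forall>a b. 1 \<le> a \<longrightarrow> a < b \<longrightarrow> b \<le> n \<longrightarrow> b - a < d \<longrightarrow> (bef x b a \<longleftrightarrow> bef y b a))"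

definition Rel :: "nat \<Rightarrow> nat \<Rightarrow> (nat \<times> nat \<times> nat set) set \<Rightarrow> (nat list \<times> nat list) set" where
  "Rel n d P = {(x,y). x \<in> perms n \<and> y \<in> perms n \<and> agree n d x y \<and>
     (\<forall>a b. 1 \<le> a \<longrightarrow> a < b \<longrightarrow> b \<le> n \<longrightarrow> b - a = d \<longrightarrow>
        (bef x b a \<longleftrightarrow> bef y b a) \<or> (free x a b \<and> (a,b,Lset x a b) \<in> P))}"

lemma bef_not_perm: "p \<in> perms n \<Longrightarrow> u \<in> {1..n} \<Longrightarrow> v \<in> {1..n} \<Longrightarrow> u \<noteq> v \<Longrightarrow> bef p u v \<longleftrightarrow> \<not> bef p v u"
  using bef_not[OF perms_distinct, of p n u v] perms_set[of p n] by auto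

lemma agree_free:
  assumes "x \<in> perms n" "y \<in> perms n" "agree n d x y" "1 \<le> a" "a < b" "b \<le> n" "b - a \<le> d"
  shows "free x a b \<longleftrightarrow> free y a b" "Lset x a b = Lset y a b"
proof -
  have h: "(bef x c a \<longleftrightarrow> bef y c a) \<and> (bef x c b \<longleftrightarrow> bef y c b)" if "a < c" "c < b" for c
  proof -
    have "bef x c a \<longleftrightarrow> bef y c a" using assms(3,4,6,7) that unfolding agree_def by auto
    moreover have "bef x b c \<longleftrightarrow> bef y b c" using assms(3,4,6,7) that unfolding agree_def by auto
    moreover have "c \<in> {1..n}" "b \<in> {1..n}" "c \<noteq> b" using assms that by auto
    ultimately show ?thesis using bef_not_perm[OF assms(1)] bef_not_perm[OF assms(2)] by metis
  qed
  show "free x a b \<longleftrightarrow> free y a b" unfolding free_def using h by blast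
  show "Lset x a b = Lset y a b" unfolding Lset_def using h by blast
qed

lemma agree_sym: "agree n d x y \<Longrightarrow> agree n d y x" unfolding agree_def by auto
lemma agree_trans: "agree n d x y \<Longrightarrow> agree n d y z \<Longrightarrow> agree n d x z" unfolding agree_def by auto

lemma Rel_equiv: "equiv (perms n) (Rel n d P)"
proof (rule equivI)
  show "refl_on (perms n) (Rel n d P)"
    unfolding refl_on_def Rel_def agree_def by auto
  show "Rel n d P \<subseteq> perms n \<times> perms n" unfolding Rel_def by auto
  show "sym (Rel n d P)"
  proof (rule symI)
    fix x y assume xy: "(x,y) \<in> Rel n d P"
    then have xp: "x \<in> perms n" "y \<in> perms n" "agree n d x y" unfolding Rel_def by auto
    show "(y,x) \<in> Rel n d P" unfolding Rel_def mem_Collect_eq prod.case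
    proof (intro conjI allI impI)
      show "y \<in> perms n" "x \<in> perms n" "agree n d y x" using xp agree_sym by auto
      fix a b assume ab: "1 \<le> a" "a < b" "b \<le> n" "b - a = d"
      show "(bef y b a \<longleftrightarrow> bef x b a) \<or> (free y a b \<and> (a, b, Lset y a b) \<in> P)"
      proof (cases "bef y b a \<longleftrightarrow> bef x b a")
        case False
        then have "free x a b \<and> (a,b,Lset x a b) \<in> P" using xy ab unfolding Rel_def by auto
        then show ?thesis using agree_free[OF xp, of a b] ab by auto
      qed simp
    qed
  qed
  show "trans (Rel n d P)"
  proof (rule transI)
    fix x y z assume xy: "(x,y) \<in> Rel n d P" and yz: "(y,z) \<in> Rel n d P"
    then have xp: "x \<in> perms n" "y \<in> perms n" "z \<in> perms n" "agree n d x y" "agree n d y z"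
      unfolding Rel_def by auto
    show "(x,z) \<in> Rel n d P" unfolding Rel_def mem_Collect_eq prod.case
    proof (intro conjI allI impI)
      show "x \<in> perms n" "z \<in> perms n" "agree n d x z" using xp agree_trans[OF xp(4,5)] by auto
      fix a b assume ab: "1 \<le> a" "a < b" "b \<le> n" "b - a = d"
      show "(bef x b a \<longleftrightarrow> bef z b a) \<or> (free x a b \<and> (a, b, Lset x a b) \<in> P)"
      proof (cases "bef x b a \<longleftrightarrow> bef z b a")
        case False
        then have "(free x a b \<and> (a,b,Lset x a b) \<in> P) \<or> (free y a b \<and> (a,b,Lset y a b) \<in> P)"
          using xy yz ab unfolding Rel_def by auto
        then show ?thesis using agree_free[OF xp(1,2,4), of a b] ab by auto
      qed simp
    qed
  qed
qed

lemma trancl_restrict: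
  assumes "(u,v) \<in> (Dr x z)\<^sup>+" "a \<le> v" "u \<le> b"
    "\<And>u' v'. a \<le> v' \<Longrightarrow> u' \<le> b \<Longrightarrow> (u',v') \<in> Dr x z \<Longrightarrow> (u',v') \<in> Dr y z"
  shows "(u,v) \<in> (Dr y z)\<^sup>+"
  using assms(1,2)
proof (induction rule: trancl_induct)
  case (base v)
  then show ?case using assms(3,4) by blast
next
  case (step w v)
  have "v < w" using step.hyps(2) by (simp add: Dr_def)
  have "w < u" using C_dec step.hyps(1) by blast
  have "(u,w) \<in> (Dr y z)\<^sup>+" using step.IH \<open>v < w\<close> step.prems by simp
  moreover have "(w,v) \<in> Dr y z" using assms(3,4) step.hyps(2) step.prems \<open>w < u\<close> by simp
  ultimately show ?case by (rule trancl_into_trancl)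
qed

lemma join_inv:
  assumes "x \<in> perms n" "z \<in> perms n" "a \<in> {1..n}" "b \<in> {1..n}" "a < b"
  shows "bef (wjoin n x z) b a \<longleftrightarrow> (b,a) \<in> (Dr x z)\<^sup>+"
  using wjoin_spec(2)[OF assms(1,2)] assms(3,4,5) by (auto simp: Jr_def)

lemma join_perm: "x \<in> perms n \<Longrightarrow> z \<in> perms n \<Longrightarrow> wjoin n x z \<in> perms n"
  using wjoin_spec(1) unfolding is_join_def by blast

lemma join_G:
  assumes p: "p \<in> perms n" and z: "z \<in> perms n" and ab: "1 \<le> a" "a < b" "b \<le> n"
    and nq: "\<not> bef (wjoin n p z) b a" and fr: "free p a b"
  shows "free (wjoin n p z) a b \<and> Lset (wjoin n p z) a b = Lset p a b"
proof -
  let ?q = "wjoin n p z"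
  have qp: "?q \<in> perms n" using join_perm[OF p z] .
  have J: "\<forall>u\<in>{1..n}. \<forall>v\<in>{1..n}. bef ?q u v \<longleftrightarrow> Jr p z u v" using wjoin_spec(2)[OF p z] .
  have qab: "bef ?q a b" using nq bef_not_perm[OF qp, of a b] ab by auto
  have key: "(bef ?q c a \<longleftrightarrow> bef p c a) \<and> (bef ?q c a \<longleftrightarrow> bef ?q c b)" if c: "a < c" "c < b" for c
  proof -
    have cr: "c \<in> {1..n}" "a \<in> {1..n}" "b \<in> {1..n}" using c ab by auto
    show ?thesis
    proof (cases "bef p c a")
      case True
      then have "(c,a) \<in> Dr p z" using c by (simp add: Dr_def)
      then have "bef ?q c a" using J cr c by (auto simp: Jr_def)
      moreover then have "bef ?q c b" using qab bef_trans[OF perms_distinct[OF qp]] by blast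
      ultimately show ?thesis using True by simp
    next
      case False
      then have "\<not> bef p c b" using fr c unfolding free_def by blast
      then have "bef p b c" using bef_not_perm[OF p, of b c] cr c by auto
      then have "(b,c) \<in> Dr p z" using c by (simp add: Dr_def)
      then have "bef ?q b c" using J cr c by (auto simp: Jr_def)
      then have "\<not> bef ?q c b" "\<not> bef ?q c a"
        using bef_asym[OF perms_distinct[OF qp]] bef_trans[OF perms_distinct[OF qp]] nq by blast+
      then show ?thesis using False by simp
    qed
  qed
  show ?thesis unfolding free_def Lset_def using key by blast
qed

lemma join_compat:
  assumes xy: "(x,y) \<in> Rel n d P" and z: "z \<in> perms n"
  shows "(wjoin n x z, wjoin n y z) \<in> Rel n d P"
proof -
  have xp: "x \<in> perms n" "y \<in> perms n" and ag: "agree n d x y" using xy unfolding Rel_def by auto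
  let ?X = "wjoin n x z" and ?Y = "wjoin n y z"
  have XP: "?X \<in> perms n" "?Y \<in> perms n" using join_perm xp z by auto
  have transfer: "bef ?X b a \<longleftrightarrow> bef ?Y b a"
    if ab: "1 \<le> a" "a < b" "b \<le> n" and same: "\<And>u v. a \<le> v \<Longrightarrow> v < u \<Longrightarrow> u \<le> b \<Longrightarrow> (bef x u v \<longleftrightarrow> bef y u v)"
    for a b
  proof -
    have r: "a \<in> {1..n}" "b \<in> {1..n}" using ab by auto
    have D1: "(u',v') \<in> Dr y z" if "a \<le> v'" "u' \<le> b" "(u',v') \<in> Dr x z" for u' v'
      using that same[of v' u'] by (auto simp: Dr_def)
    have D2: "(u',v') \<in> Dr x z" if "a \<le> v'" "u' \<le> b" "(u',v') \<in> Dr y z" for u' v'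
      using that same[of v' u'] by (auto simp: Dr_def)
    show ?thesis
      using join_inv[OF xp(1) z r ab(2)] join_inv[OF xp(2) z r ab(2)]
        trancl_restrict[of b a x z a b y, OF _ order.refl order.refl D1]
        trancl_restrict[of b a y z a b x, OF _ order.refl order.refl D2]
      by blast
  qed
  have agX: "agree n d ?X ?Y" unfolding agree_def
  proof (intro allI impI)
    fix a b assume ab: "1 \<le> a" "a < b" "b \<le> n" "b - a < d"
    show "bef ?X b a \<longleftrightarrow> bef ?Y b a"
    proof (rule transfer[OF ab(1-3)])
      fix u v assume "a \<le> v" "v < u" "u \<le> b"
      then show "bef x u v \<longleftrightarrow> bef y u v" using ag ab unfolding agree_def by auto
    qed
  qed
  show ?thesis unfolding Rel_def mem_Collect_eq prod.case
  proof (intro conjI allI impI)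
    show "?X \<in> perms n" "?Y \<in> perms n" "agree n d ?X ?Y" using XP agX by auto
    fix a b assume ab: "1 \<le> a" "a < b" "b \<le> n" "b - a = d"
    show "(bef ?X b a \<longleftrightarrow> bef ?Y b a) \<or> (free ?X a b \<and> (a, b, Lset ?X a b) \<in> P)"
    proof (cases "bef ?X b a \<longleftrightarrow> bef ?Y b a")
      case True then show ?thesis by simp
    next
      case False
      then have ne: "bef ?X b a \<noteq> bef ?Y b a" by simp
    have ab1: "1 \<le> a" using ab by simp
    have "bef x b a \<noteq> bef y b a"
    proof
      assume eq: "bef x b a = bef y b a"
      have "bef ?X b a \<longleftrightarrow> bef ?Y b a"
      proof (rule transfer[OF ab1 ab(2,3)])
        fix u v assume uv: "a \<le> v" "v < u" "u \<le> b"
        show "bef x u v \<longleftrightarrow> bef y u v"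
        proof (cases "u = b \<and> v = a")
          case True then show ?thesis using eq by simp
        next
          case False
          then have "u - v < d" using uv ab by auto
          then show ?thesis using ag uv ab unfolding agree_def by auto
        qed
      qed
      then show False using ne by simp
    qed
    then have fx: "free x a b" "(a,b,Lset x a b) \<in> P" using xy ab unfolding Rel_def by auto
    have fy: "free y a b" "Lset y a b = Lset x a b"
      using agree_free[OF xp ag, of a b] ab fx by auto
    have eXY: "free ?X a b \<longleftrightarrow> free ?Y a b" "Lset ?X a b = Lset ?Y a b"
      using agree_free[OF XP agX, of a b] ab by auto
    have "free ?X a b \<and> (a, b, Lset ?X a b) \<in> P"
    proof (cases "bef ?X b a")
      case False
      then show ?thesis using join_G[OF xp(1) z ab1 ab(2,3) _ fx(1)] fx(2) by simp
    next
      case True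
      then have "\<not> bef ?Y b a" using ne by simp
      then show ?thesis using join_G[OF xp(2) z ab1 ab(2,3) _ fy(1)] fy(2) fx(2) eXY by simp
    qed
    then show ?thesis by simp
    qed
  qed
qed



definition flipP :: "(nat \<times> nat \<times> nat set) set \<Rightarrow> (nat \<times> nat \<times> nat set) set" where
  "flipP P = {(a, b, {a<..<b} - L) | a b L. (a,b,L) \<in> P}"

lemma flip_flip:
  assumes "\<And>a b L. (a,b,L) \<in> P \<Longrightarrow> L \<subseteq> {a<..<b}"
  shows "flipP (flipP P) = P"
proof -
  have "flipP (flipP P) = {(a, b, {a<..<b} - ({a<..<b} - L)) | a b L. (a,b,L) \<in> P}"
    unfolding flipP_def by blast
  also have "\<dots> = {(a, b, L) | a b L. (a,b,L) \<in> P}"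
    using assms by (metis (no_types, lifting) Diff_Diff_Int inf.absorb_iff2)
  also have "\<dots> = P" by auto
  finally show ?thesis .
qed

lemma rev_free_L:
  assumes "x \<in> perms n" "1 \<le> a" "a < b" "b \<le> n"
  shows "free (rev x) a b \<longleftrightarrow> free x a b" "Lset (rev x) a b = {a<..<b} - Lset x a b"
proof -
  have h: "(bef (rev x) c a \<longleftrightarrow> \<not> bef x c a) \<and> (bef (rev x) c b \<longleftrightarrow> \<not> bef x c b)" if "a < c" "c < b" for c
    using bef_not_perm[OF assms(1), of a c] bef_not_perm[OF assms(1), of b c] that assms
    unfolding bef_rev by auto
  show "free (rev x) a b \<longleftrightarrow> free x a b" unfolding free_def using h by blast
  show "Lset (rev x) a b = {a<..<b} - Lset x a b" unfolding Lset_def using h by auto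
qed

lemma rev_inv:
  assumes "x \<in> perms n" "1 \<le> a" "a < b" "b \<le> n"
  shows "bef (rev x) b a \<longleftrightarrow> \<not> bef x b a"
  using bef_not_perm[OF assms(1), of a b] assms unfolding bef_rev by auto

lemma rel_rev:
  assumes xy: "(x,y) \<in> Rel n d P"
  shows "(rev x, rev y) \<in> Rel n d (flipP P)"
proof -
  have xp: "x \<in> perms n" "y \<in> perms n" and ag: "agree n d x y" using xy unfolding Rel_def by auto
  show ?thesis unfolding Rel_def mem_Collect_eq prod.case
  proof (intro conjI allI impI)
    show "rev x \<in> perms n" "rev y \<in> perms n" using rev_perms xp by auto
    show "agree n d (rev x) (rev y)" unfolding agree_def
      using ag rev_inv[OF xp(1)] rev_inv[OF xp(2)] unfolding agree_def by auto
    fix a b assume ab: "1 \<le> a" "a < b" "b \<le> n" "b - a = d"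
    show "(bef (rev x) b a \<longleftrightarrow> bef (rev y) b a) \<or> (free (rev x) a b \<and> (a, b, Lset (rev x) a b) \<in> flipP P)"
    proof (cases "bef x b a \<longleftrightarrow> bef y b a")
      case True then show ?thesis using rev_inv[OF xp(1) ab(1-3)] rev_inv[OF xp(2) ab(1-3)] by simp
    next
      case False
      then have "free x a b" "(a,b,Lset x a b) \<in> P" using xy ab unfolding Rel_def by auto
      then show ?thesis using rev_free_L[OF xp(1) ab(1-3)] unfolding flipP_def by blast
    qed
  qed
qed

lemma meet_compat:
  assumes P: "\<And>a b L. (a,b,L) \<in> P \<Longrightarrow> L \<subseteq> {a<..<b}"
    and xy: "(x,y) \<in> Rel n d P" and z: "z \<in> perms n"
  shows "(wmeet n x z, wmeet n y z) \<in> Rel n d P"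
proof -
  have xp: "x \<in> perms n" "y \<in> perms n" using xy unfolding Rel_def by auto
  have "(rev x, rev y) \<in> Rel n d (flipP P)" using rel_rev[OF xy] .
  then have "(wjoin n (rev x) (rev z), wjoin n (rev y) (rev z)) \<in> Rel n d (flipP P)"
    using join_compat rev_perms[OF z] by blast
  then have "(rev (wjoin n (rev x) (rev z)), rev (wjoin n (rev y) (rev z))) \<in> Rel n d (flipP (flipP P))"
    using rel_rev by blast
  then show ?thesis using wmeet_eq[OF xp(1) z] wmeet_eq[OF xp(2) z] flip_flip[OF P] by simp
qed

theorem Rel_cong:
  assumes P: "\<And>a b L. (a,b,L) \<in> P \<Longrightarrow> L \<subseteq> {a<..<b}"
  shows "lattice_cong n (Rel n d P)"
  unfolding lattice_cong_def
  using Rel_equiv join_compat meet_compat[OF P] by blast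



definition Lft :: "nat \<Rightarrow> nat \<Rightarrow> nat \<Rightarrow> nat set \<Rightarrow> nat list" where
  "Lft n a b L = filter (\<lambda>c. c \<noteq> a \<and> c \<noteq> b \<and> \<not> (a < c \<and> c < b \<and> c \<notin> L)) [1..<Suc n]"
definition Rt :: "nat \<Rightarrow> nat \<Rightarrow> nat \<Rightarrow> nat set \<Rightarrow> nat list" where
  "Rt n a b L = filter (\<lambda>c. a < c \<and> c < b \<and> c \<notin> L) [1..<Suc n]"
definition wp where "wp n a b L = Lft n a b L @ [a,b] @ Rt n a b L"
definition wq where "wq n a b L = Lft n a b L @ [b,a] @ Rt n a b L"

lemma set_filter_upt: "set (filter P [1..<Suc n]) = {c\<in>{1..n}. P c}"
  by auto
lemma set_Lft: "set (Lft n a b L) = {c\<in>{1..n}. c \<noteq> a \<and> c \<noteq> b \<and> \<not> (a < c \<and> c < b \<and> c \<notin> L)}"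
  unfolding Lft_def by (rule set_filter_upt)
lemma set_Rt: "set (Rt n a b L) = {c\<in>{1..n}. a < c \<and> c < b \<and> c \<notin> L}"
  unfolding Rt_def by (rule set_filter_upt)

context
  fixes n a b :: nat and L :: "nat set"
  assumes ab: "1 \<le> a" "a < b" "b \<le> n" and Lab: "L \<subseteq> {a<..<b}"
begin

lemma ab_notin: "a \<notin> set (Lft n a b L)" "b \<notin> set (Lft n a b L)" "a \<notin> set (Rt n a b L)" "b \<notin> set (Rt n a b L)"
  unfolding set_Lft set_Rt by simp_all

lemma nb: "\<not> bef (Lft n a b L) a u" "\<not> bef (Lft n a b L) u a" "\<not> bef (Lft n a b L) b u" "\<not> bef (Lft n a b L) u b"
  "\<not> bef (Rt n a b L) a u" "\<not> bef (Rt n a b L) u a" "\<not> bef (Rt n a b L) b u" "\<not> bef (Rt n a b L) u b"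
  using bef_set ab_notin by metis+

lemma wp_perm: "wp n a b L \<in> perms n" and wq_perm: "wq n a b L \<in> perms n"
  unfolding perms_def wp_def wq_def using ab
  by (auto simp: Lft_def Rt_def)

lemma wp_wq_fence: "(wp n a b L, wq n a b L) \<in> fence n a b L"
proof -
  let ?i = "length (Lft n a b L)"
  have "Suc ?i < length (wp n a b L)" "wp n a b L ! ?i = a" "wp n a b L ! Suc ?i = b"
    "wq n a b L = (wp n a b L)[?i := b, Suc ?i := a]"
    "\<forall>c\<in>L. c \<in> set (take ?i (wp n a b L))"
    "\<forall>c\<in>{a<..<b} - L. c \<in> set (drop (Suc (Suc ?i)) (wp n a b L))"
    unfolding wp_def wq_def using ab Lab by (auto simp: nth_append list_update_append set_Lft set_Rt)
  then show ?thesis unfolding fence_def using wp_perm wq_perm by blast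
qed

lemma wp_bef_a_b: "\<not> bef (wp n a b L) b a" "bef (wq n a b L) b a"
  unfolding wp_def wq_def using ab ab_notin
  by (auto simp: bef_append bef_Cons nb)

lemma wp_wq_bef: "\<not> (u = a \<and> v = b) \<Longrightarrow> \<not> (u = b \<and> v = a) \<Longrightarrow> bef (wp n a b L) u v \<longleftrightarrow> bef (wq n a b L) u v"
  unfolding wp_def wq_def by (auto simp: bef_append bef_Cons)

lemma wp_free: "free (wp n a b L) a b" and wp_Lset: "Lset (wp n a b L) a b = L"
proof -
  have h: "(bef (wp n a b L) c a \<longleftrightarrow> c \<in> L) \<and> (bef (wp n a b L) c b \<longleftrightarrow> c \<in> L)" if "a < c" "c < b" for c
    unfolding wp_def using ab that ab_notin by (auto simp: bef_append bef_Cons nb set_Lft set_Rt)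
  show "free (wp n a b L) a b" unfolding free_def using h by blast
  show "Lset (wp n a b L) a b = L" unfolding Lset_def using h Lab by auto
qed

lemma wit_notin_short: "b - a < d \<Longrightarrow> (wp n a b L, wq n a b L) \<notin> Rel n d P"
  unfolding Rel_def agree_def using ab wp_bef_a_b by auto

lemma wit_notin_P: 
  assumes "b - a = d" "(a,b,L) \<notin> P" shows "(wp n a b L, wq n a b L) \<notin> Rel n d P"
proof
  assume "(wp n a b L, wq n a b L) \<in> Rel n d P"
  then have "(bef (wp n a b L) b a \<longleftrightarrow> bef (wq n a b L) b a) \<or>
      (free (wp n a b L) a b \<and> (a, b, Lset (wp n a b L) a b) \<in> P)"
    unfolding Rel_def using ab assms(1) by auto
  then show False using wp_bef_a_b wp_Lset assms(2) by auto
qed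

lemma wit_in: 
  assumes "b - a = d" "(a,b,L) \<in> P"
  shows "(wp n a b L, wq n a b L) \<in> Rel n d P"
  unfolding Rel_def mem_Collect_eq prod.case
proof (intro conjI allI impI)
  show "wp n a b L \<in> perms n" "wq n a b L \<in> perms n" by (fact wp_perm, fact wq_perm)
  show "agree n d (wp n a b L) (wq n a b L)" unfolding agree_def
  proof (intro allI impI)
    fix a' b' assume h': "1 \<le> a'" "a' < b'" "b' \<le> n" "b' - a' < d"
    have "\<not> (b' = a \<and> a' = b)" using h' assms(1) ab by (intro notI, clarify, linarith)
    moreover have "\<not> (b' = b \<and> a' = a)"
    proof
      assume "b' = b \<and> a' = a" then show False using h'(4) assms(1) by simp
    qed
    ultimately show "bef (wp n a b L) b' a' \<longleftrightarrow> bef (wq n a b L) b' a'" by (rule wp_wq_bef)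
  qed
  fix a' b' assume ab': "1 \<le> a'" "a' < b'" "b' \<le> n" "b' - a' = d"
  show "(bef (wp n a b L) b' a' \<longleftrightarrow> bef (wq n a b L) b' a') \<or>
      (free (wp n a b L) a' b' \<and> (a', b', Lset (wp n a b L) a' b') \<in> P)"
  proof (cases "a' = a \<and> b' = b")
    case True then show ?thesis using wp_free wp_Lset assms(2) by simp
  next
    case False
    have "\<not> (b' = a \<and> a' = b)" using ab ab' by (intro notI, clarify, linarith)
    moreover have "\<not> (b' = b \<and> a' = a)" using False by blast
    ultimately have "bef (wp n a b L) b' a' \<longleftrightarrow> bef (wq n a b L) b' a'" by (rule wp_wq_bef)
    then show ?thesis by (rule disjI1)
  qed
qed

end



lemma ivl_Suc: "2 \<le> n \<Longrightarrow> {2..<Suc n} = insert n {2..<n}" by auto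

lemma geo2: "2 \<le> n \<Longrightarrow> (\<Sum>d\<in>{2..<n}. (2::int) ^ (d - 1)) = 2 ^ (n - 1) - 2"
proof (induction n rule: nat_induct_at_least)
  case base then show ?case by simp
next
  case (Suc n)
  have "(\<Sum>d\<in>{2..<Suc n}. (2::int) ^ (d - 1)) = 2 ^ (n - 1) + (\<Sum>d\<in>{2..<n}. (2::int) ^ (d - 1))"
    using ivl_Suc[OF Suc.hyps] by simp
  also have "\<dots> = 2 ^ (n - 1) + 2 ^ (n - 1) - 2" using Suc.IH by simp
  also have "\<dots> = 2 ^ (Suc n - 1) - 2" using Suc.hyps by (cases n) auto
  finally show ?case .
qed

lemma sum_id: "2 \<le> n \<Longrightarrow> (\<Sum>d\<in>{2..<n}. int (n - d) * 2 ^ (d - 1)) = 2 ^ n - 2 * int n"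
proof (induction n rule: nat_induct_at_least)
  case base then show ?case by simp
next
  case (Suc n)
  have "(\<Sum>d\<in>{2..<Suc n}. int (Suc n - d) * 2 ^ (d - 1)) =
      int (Suc n - n) * 2 ^ (n - 1) + (\<Sum>d\<in>{2..<n}. int (Suc n - d) * 2 ^ (d - 1))"
    using ivl_Suc[OF Suc.hyps] by simp
  also have "(\<Sum>d\<in>{2..<n}. int (Suc n - d) * 2 ^ (d - 1)) =
      (\<Sum>d\<in>{2..<n}. int (n - d) * 2 ^ (d - 1) + 2 ^ (d - 1))"
    by (rule sum.cong) (auto simp: algebra_simps of_nat_diff Suc_diff_le)
  also have "\<dots> = (2 ^ n - 2 * int n) + (2 ^ (n - 1) - 2)"
    using Suc.IH geo2[OF Suc.hyps] by (simp add: sum.distrib)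
  finally have "(\<Sum>d\<in>{2..<Suc n}. int (Suc n - d) * 2 ^ (d - 1)) = 2 ^ (n-1) + (2 ^ n - 2 * int n) + (2 ^ (n - 1) - 2)"
    by simp
  also have "\<dots> = 2 ^ Suc n - 2 * int (Suc n)"
  proof -
    have "(2::int) ^ n = 2 * 2 ^ (n - 1)" using Suc.hyps by (cases n) auto
    then show ?thesis by simp
  qed
  finally show ?case .
qed



definition Fd :: "nat \<Rightarrow> nat \<Rightarrow> (nat \<times> nat \<times> nat set) set" where
  "Fd n d = {(a,b,L). 1 \<le> a \<and> a < b \<and> b \<le> n \<and> L \<subseteq> {a<..<b} \<and> b - a = d}"

lemma Fd_finite: "finite (Fd n d)"
proof (rule finite_subset)
  show "Fd n d \<subseteq> {1..n} \<times> {1..n} \<times> Pow {1..n}" unfolding Fd_def by auto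
qed auto

definition fs :: "nat \<Rightarrow> nat \<Rightarrow> (nat \<times> nat \<times> nat set) list" where
  "fs n d = (SOME xs. set xs = Fd n d \<and> distinct xs)"

lemma fs: "set (fs n d) = Fd n d" "distinct (fs n d)"
proof -
  have "\<exists>xs. set xs = Fd n d \<and> distinct xs" using finite_distinct_list[OF Fd_finite] .
  then have "set (fs n d) = Fd n d \<and> distinct (fs n d)" unfolding fs_def by (rule someI_ex)
  then show "set (fs n d) = Fd n d" "distinct (fs n d)" by auto
qed

lemma fs_length: "length (fs n d) = card (Fd n d)"
  using distinct_card[OF fs(2)] fs(1) by simp

definition phi :: "nat \<Rightarrow> nat \<times> nat \<Rightarrow> (nat list \<times> nat list) set" where
  "phi n dk = Rel n (fst dk) (set (take (snd dk) (fs n (fst dk))))"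

definition Idx :: "nat \<Rightarrow> (nat \<times> nat) set" where
  "Idx n = insert (n,0) (SIGMA d:{2..<n}. {1..card (Fd n d)})"

lemma take_interval: "(a,b,L) \<in> set (take k (fs n d)) \<Longrightarrow> L \<subseteq> {a<..<b}"
  using set_take_subset[of k "fs n d"] fs(1) unfolding Fd_def by auto

lemma Rel_mono_d: "d' < d \<Longrightarrow> Rel n d P \<subseteq> Rel n d' Q"
  unfolding Rel_def agree_def by auto

lemma Rel_mono_P: "P \<subseteq> Q \<Longrightarrow> Rel n d P \<subseteq> Rel n d Q"
  unfolding Rel_def by blast

lemma nth_not_in_take:
  assumes "distinct xs" "i < length xs" "k \<le> i" shows "xs ! i \<notin> set (take k xs)"
proof
  assume "xs ! i \<in> set (take k xs)"
  then obtain j where j: "j < length (take k xs)" "take k xs ! j = xs ! i" by (auto simp: in_set_conv_nth)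
  then have "xs ! j = xs ! i" "j < k" "j < length xs" by auto
  then have "j = i" using assms nth_eq_iff_index_eq by blast
  then show False using \<open>j < k\<close> assms(3) by simp
qed

lemma phi_strict:
  assumes i: "(d,k) \<in> Idx n" and j: "(d',k') \<in> Idx n" and lt: "d' < d \<or> (d = d' \<and> k < k')"
  shows "phi n (d,k) \<subset> phi n (d',k')"
proof -
  have j2: "2 \<le> d'" "d' < n" "1 \<le> k'" "k' \<le> card (Fd n d')"
    using j lt i unfolding Idx_def by auto
  let ?xs = "fs n d'"
  have kl: "k' - 1 < length ?xs" using j2 fs_length by simp
  obtain a b L where f: "?xs ! (k' - 1) = (a,b,L)" by (metis prod_cases3)
  have l1: "k' - 1 < length (take k' ?xs)" using kl j2 by simp
  have l2: "take k' ?xs ! (k' - 1) = ?xs ! (k' - 1)" using j2 by simp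
  have fin: "(a,b,L) \<in> set (take k' ?xs)" using nth_mem[OF l1] l2 f by simp
  have "?xs ! (k'-1) \<in> set ?xs" by (rule nth_mem[OF kl])
  then have fF: "(a,b,L) \<in> Fd n d'" using f fs(1) by simp
  then have ab: "1 \<le> a" "a < b" "b \<le> n" "L \<subseteq> {a<..<b}" "b - a = d'" unfolding Fd_def by auto
  have w_in: "(wp n a b L, wq n a b L) \<in> phi n (d',k')"
    unfolding phi_def using wit_in[OF ab(1-4,5) fin] by simp
  have w_out: "(wp n a b L, wq n a b L) \<notin> phi n (d,k)"
    using lt
  proof
    assume "d' < d"
    then show ?thesis unfolding phi_def using wit_notin_short[OF ab(1-4)] ab(5) by simp
  next
    assume h: "d = d' \<and> k < k'"
    then have "k \<le> k' - 1" by linarith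
    then have "(a,b,L) \<notin> set (take k ?xs)" using nth_not_in_take[OF fs(2) kl, of k] f by simp
    then show ?thesis unfolding phi_def using wit_notin_P[OF ab(1-4)] ab(5) h by simp
  qed
  have sub: "phi n (d,k) \<subseteq> phi n (d',k')"
    using lt
  proof
    assume "d' < d" then show ?thesis unfolding phi_def by (simp add: Rel_mono_d)
  next
    assume h: "d = d' \<and> k < k'"
    then have "set (take k (fs n d')) \<subseteq> set (take k' (fs n d'))" by (simp add: set_take_subset_set_take)
    then show ?thesis unfolding phi_def using h Rel_mono_P by simp
  qed
  show ?thesis using sub w_in w_out by blast
qed

lemma phi_comparable:
  assumes "i \<in> Idx n" "j \<in> Idx n" "i \<noteq> j"
  shows "phi n i \<subset> phi n j \<or> phi n j \<subset> phi n i"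
proof -
  obtain d k d' k' where ij: "i = (d,k)" "j = (d',k')" by (cases i, cases j) auto
  then have "d' < d \<or> (d = d' \<and> k < k') \<or> d < d' \<or> (d = d' \<and> k' < k)" using assms(3) by auto
  then show ?thesis
  proof (elim disjE)
    assume "d' < d" then show ?thesis using phi_strict[of d k n d' k'] assms ij by simp
  next
    assume "d = d' \<and> k < k'" then show ?thesis using phi_strict[of d k n d' k'] assms ij by simp
  next
    assume "d < d'" then show ?thesis using phi_strict[of d' k' n d k] assms ij by simp
  next
    assume "d = d' \<and> k' < k" then show ?thesis using phi_strict[of d' k' n d k] assms ij by simp
  qed
qed

lemma card_Fd: "1 \<le> d \<Longrightarrow> card (Fd n d) = (n - d) * 2 ^ (d - 1)"
proof -
  assume d: "1 \<le> d"
  have eq: "Fd n d = (\<lambda>(a,L). (a, a + d, L)) ` (SIGMA a:{1..n-d}. Pow {a<..<a+d})"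
  proof (rule set_eqI)
    fix f
    show "f \<in> Fd n d \<longleftrightarrow> f \<in> (\<lambda>(a,L). (a, a + d, L)) ` (SIGMA a:{1..n-d}. Pow {a<..<a+d})"
    proof
      assume "f \<in> Fd n d"
      then obtain a b L where f: "f = (a,b,L)" "1 \<le> a" "a < b" "b \<le> n" "L \<subseteq> {a<..<b}" "b - a = d"
        unfolding Fd_def by auto
      then have "b = a + d" "a \<le> n - d" by auto
      then show "f \<in> (\<lambda>(a,L). (a, a + d, L)) ` (SIGMA a:{1..n-d}. Pow {a<..<a+d})"
        using f by (auto intro!: image_eqI[of _ _ "(a,L)"])
    next
      assume "f \<in> (\<lambda>(a,L). (a, a + d, L)) ` (SIGMA a:{1..n-d}. Pow {a<..<a+d})"
      then show "f \<in> Fd n d" unfolding Fd_def using d by auto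
    qed
  qed
  have inj: "inj_on (\<lambda>(a,L). (a, a + d, L)) (SIGMA a:{1..n-d}. Pow {a<..<a+d})"
    by (auto simp: inj_on_def)
  have "card (Fd n d) = card (SIGMA a:{1..n-d}. Pow {a<..<a+d})"
    unfolding eq using card_image[OF inj] .
  also have "\<dots> = (\<Sum>a\<in>{1..n-d}. card (Pow {a<..<a+d}))" by (rule card_SigmaI) auto
  also have "\<dots> = (\<Sum>a\<in>{1..n-d}. 2 ^ (d - 1))" by (simp add: card_Pow)
  also have "\<dots> = (n - d) * 2 ^ (d - 1)" by simp
  finally show ?thesis .
qed

lemma card_Idx: "3 \<le> n \<Longrightarrow> int (card (Idx n)) = 2 ^ n - 2 * int n + 1"
proof -
  assume n: "3 \<le> n"
  have fin: "finite (SIGMA d:{2..<n}. {1..card (Fd n d)})" by auto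
  have "(n,0) \<notin> (SIGMA d:{2..<n}. {1..card (Fd n d)})" by auto
  then have "card (Idx n) = Suc (card (SIGMA d:{2..<n}. {1..card (Fd n d)}))"
    unfolding Idx_def using fin by simp
  also have "card (SIGMA d:{2..<n}. {1..card (Fd n d)}) = (\<Sum>d\<in>{2..<n}. card {1..card (Fd n d)})"
    by (rule card_SigmaI) auto
  also have "\<dots> = (\<Sum>d\<in>{2..<n}. card (Fd n d))" by simp
  also have "\<dots> = (\<Sum>d\<in>{2..<n}. (n - d) * 2 ^ (d - 1))"
    by (rule sum.cong) (auto simp: card_Fd)
  finally have "int (card (Idx n)) = 1 + (\<Sum>d\<in>{2..<n}. int (n - d) * 2 ^ (d - 1))"
    by simp
  then show ?thesis using sum_id[of n] n by simp
qed



lemma perms_finite: "finite (perms n)"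
proof (rule finite_subset)
  show "perms n \<subseteq> {xs. set xs \<subseteq> {1..n} \<and> length xs = n}"
    unfolding perms_def using distinct_card by fastforce
  show "finite {xs. set xs \<subseteq> {1..n} \<and> length xs = n}" by (rule finite_lists_length_eq) simp
qed

lemma quot_card_less:
  assumes fin: "finite A" and e: "equiv A R" and e': "equiv A R'" and sub: "R \<subset> R'"
  shows "card (A // R') < card (A // R)"
proof -
  define f where "f X = R' `` X" for X
  have fcl: "f (R `` {x}) = R' `` {x}" if "x \<in> A" for x
  proof
    show "f (R `` {x}) \<subseteq> R' `` {x}"
      unfolding f_def using sub e' that unfolding equiv_def trans_def by blast
    show "R' `` {x} \<subseteq> f (R `` {x})"
      unfolding f_def using e that unfolding equiv_def refl_on_def by blast
  qed
  have img: "f ` (A // R) = A // R'"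
  proof
    show "f ` (A // R) \<subseteq> A // R'" using fcl unfolding quotient_def by auto
    show "A // R' \<subseteq> f ` (A // R)" using fcl unfolding quotient_def by force
  qed
  obtain p where p: "p \<in> R'" "p \<notin> R" using sub by blast
  obtain x y where "p = (x,y)" by (cases p)
  then have xy: "(x,y) \<in> R'" "(x,y) \<notin> R" using p by auto
  have xyA: "x \<in> A" "y \<in> A" using xy e' unfolding equiv_def refl_on_def by auto
  have "R `` {x} \<noteq> R `` {y}"
  proof
    assume "R `` {x} = R `` {y}"
    then have "y \<in> R `` {x}" using e xyA unfolding equiv_def refl_on_def by auto
    then show False using xy by auto
  qed
  moreover have "f (R `` {x}) = f (R `` {y})" using fcl xyA equiv_class_eq[OF e' xy(1)] by simp
  moreover have "R `` {x} \<in> A // R" "R `` {y} \<in> A // R" using xyA unfolding quotient_def by auto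
  ultimately have ninj: "\<not> inj_on f (A // R)" unfolding inj_on_def by blast
  have finq: "finite (A // R)" by (rule finite_quotient[OF fin equiv_type[OF e]])
  have "card (f ` (A // R)) \<noteq> card (A // R)" using ninj eq_card_imp_inj_on[OF finq] by blast
  moreover have "card (f ` (A // R)) \<le> card (A // R)" using card_image_le[OF finq] .
  ultimately show ?thesis using img by simp
qed

lemma iso_card: "graph_iso G H \<Longrightarrow> card (fst G) = card (fst H)"
  unfolding graph_iso_def using bij_betw_same_card by blast

lemma phi_ess:
  assumes n: "3 \<le> n" and i: "(d,k) \<in> Idx n"
  shows "phi n (d,k) \<in> ess_congs n"
proof -
  have d: "2 \<le> d" using i n unfolding Idx_def by auto
  have cong: "lattice_cong n (phi n (d,k))" unfolding phi_def using Rel_cong take_interval by simp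
  have "(a, a+1, {}) \<notin> fences_of n (phi n (d,k))" for a
  proof
    assume "(a, a+1, {}) \<in> fences_of n (phi n (d,k))"
    then have v: "1 \<le> a" "a < a + 1" "a + 1 \<le> n" and sub: "fence n a (a+1) {} \<subseteq> phi n (d,k)"
      unfolding fences_of_def valid_fence_def by auto
    have e: "{} \<subseteq> {a<..<a+1}" by simp
    have "(wp n a (a+1) {}, wq n a (a+1) {}) \<in> fence n a (a+1) {}" by (rule wp_wq_fence[OF v e])
    moreover have "(wp n a (a+1) {}, wq n a (a+1) {}) \<notin> phi n (d,k)"
      unfolding phi_def using wit_notin_short[OF v e] d by simp
    ultimately show False using sub by blast
  qed
  then show ?thesis unfolding ess_congs_def using cong by blast
qed

theorem mainTheorem9:
  fixes n :: nat
  assumes "n \<ge> 3"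
  shows "\<exists>S \<subseteq> ess_congs n.
           int (card S) \<ge> 2 ^ n - 2 * int n + 1 \<and>
           (\<forall>R\<in>S. \<forall>R'\<in>S. R \<noteq> R' \<longrightarrow> \<not> graph_iso (QR n R) (QR n R'))"
proof (intro exI conjI)
  let ?S = "phi n ` Idx n"
  show "?S \<subseteq> ess_congs n" using phi_ess[OF assms] by auto
  have inj: "inj_on (phi n) (Idx n)"
    unfolding inj_on_def using phi_comparable by blast
  have "card ?S = card (Idx n)" using card_image[OF inj] .
  then show "int (card ?S) \<ge> 2 ^ n - 2 * int n + 1" using card_Idx[OF assms] by simp
  show "\<forall>R\<in>?S. \<forall>R'\<in>?S. R \<noteq> R' \<longrightarrow> \<not> graph_iso (QR n R) (QR n R')"
  proof (intro ballI impI notI)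
    fix R R' assume R: "R \<in> ?S" "R' \<in> ?S" "R \<noteq> R'" and iso: "graph_iso (QR n R) (QR n R')"
    obtain i j where ij: "i \<in> Idx n" "j \<in> Idx n" "R = phi n i" "R' = phi n j" using R by blast
    then have "i \<noteq> j" using R by blast
    then have "phi n i \<subset> phi n j \<or> phi n j \<subset> phi n i" using phi_comparable ij by blast
    moreover have "equiv (perms n) (phi n i)" "equiv (perms n) (phi n j)"
      unfolding phi_def using Rel_equiv by auto
    ultimately have "card (perms n // R) \<noteq> card (perms n // R')"
      using quot_card_less[OF perms_finite] ij by (metis less_irrefl_nat)
    moreover have "card (perms n // R) = card (perms n // R')"
      using iso_card[OF iso] unfolding QR_def by simp
    ultimately show False by simp
  qed
qed


end
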